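(* Let $\pi$ be an $X_q(A_1)$-module algebra structure on $\mathbb C_q[x,y,z]$ of non-diagonal type, with $K_i(x)=\alpha_ix$, $K_i(y)=\beta_iy+t_ixz$, $K_i(z)=\gamma_iz$ ($i=1,2$). Let $a_0=(E(x))_0$, $c_0=(E(z))_0$, $a_0'=(F(x))_0$, $c_0'=(F(z))_0$. Then: 1. If $a_0\neq0$, then $\alpha_1=q$, $\alpha_2=-q$, $\beta_1^{-1}\beta_2=q$, $\gamma_1^{-1}\gamma_2=q$, $(E(x))_1=0$ and $(E(y))_1=-\frac{a_0(t_2+qt_1)}{2q\beta_1}z$. 2. If $c_0\neq0$, then $\gamma_1=q$, $\gamma_2=-q$, $\beta_1^{-1}\beta_2=q^{-1}$, $\alpha_1^{-1}\alpha_2=q^{-1}$, $(E(z))_1=0$ and $(E(y))_1=-\frac{c_0(t_1+qt_2)}{2q\beta_1}x$. 3. If $a_0'\neq0$, then $\alpha_1=q^{-1}$, $\alpha_2=-q^{-1}$, $\beta_1\beta_2^{-1}=q^{-1}$, $\gamma_1\gamma_2^{-1}=q^{-1}$, $(F(x))_1=0$ and $(F(y))_1=\frac{a_0'(t_2-qt_1)}{2q\alpha_2\gamma_2}z$. 4. If $c_0'\neq0$, then $\gamma_1=q^{-1}$, $\gamma_2=-q^{-1}$, $\beta_1\beta_2^{-1}=q$, $\alpha_1\alpha_2^{-1}=q$, $(F(z))_1=0$ and $(F(y))_1=\frac{c_0'(qt_2-t_1)}{2q\alpha_2\gamma_2}x$.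
   Context: Fix $q\in\mathbb C^*$ not a root of unity, i.e. $q^n\neq1$ for all nonzero integers $n$. $X_q(A_1)$ is the unital associative $\mathbb C$-algebra generated by $E,F,K_1^{\pm1},K_2^{\pm1}$ with relations: - $K_iK_i^{-1}=K_i^{-1}K_i=1$ and $K_1K_2=K_2K_1$; - $K_1E=q^{-1}EK_1$, $K_1F=qFK_1$, $K_2E=-q^{-1}EK_2$, $K_2F=-qFK_2$; - $EF-FE=\frac{K_2K_1^{-1}-K_2^{-1}K_1}{q-q^{-1}}$; - $E^2=F^2=0$. It is a Hopf algebra with $\Delta(K_i)=K_i\otimes K_i$, $\Delta(E)=E\otimes1+K_2K_1^{-1}\otimes E$, $\Delta(F)=1\otimes F+F\otimes K_2^{-1}K_1$, $\varepsilon(K_i)=1$ and $\varepsilon(E)=\varepsilon(F)=0$. $\mathbb C_q[x,y,z]$ is the unital $\mathbb C$-algebra generated by $x,y,z$ with $yx=qxy$, $zy=qyz$, $zx=qxz$. It is graded by total degree in $x,y,z$. For $p\in\mathbb C_q[x,y,z]$, $(p)_s$ denotes the homogeneous component of $p$ of degree $s$. An $X_q(A_1)$-module algebra structure on $A=\mathbb C_q[x,y,z]$ is an algebra homomorphism $\pi:X_q(A_1)\to\mathrm{End}_{\mathbb C}(A)$ such that $\pi(h)(ab)=\sum\pi(h_{(1)})(a)\pi(h_{(2)})(b)$ and $\pi(h)(1)=\varepsilon(h)1$, where $\Delta(h)=\sum h_{(1)}\otimes h_{(2)}$. One writes $h(a)$ for $\pi(h)(a)$. Concretely, $K_1,K_2$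 act by algebra automorphisms, $E(ab)=E(a)b+K_2K_1^{-1}(a)E(b)$ and $F(ab)=aF(b)+F(a)K_2^{-1}K_1(b)$. The structure is of non-diagonal type if there are $\alpha_i,\beta_i,\gamma_i,t_i\in\mathbb C^*$ ($i=1,2$) with $K_i(x)=\alpha_ix$, $K_i(y)=\beta_iy+t_ixz$, $K_i(z)=\gamma_iz$. *)

theory Defs
  imports Complex_Main
begin

text \<open>Elements of the quantum polynomial algebra C_q[x,y,z] are represented in the
PBW basis x^i y^j z^k: a function p with p i j k the coefficient of x^i y^j z^k,
having finite support.\<close>

type_synonym qpol = "nat \<Rightarrow> nat \<Rightarrow> nat \<Rightarrow> complex"

definition QP :: "qpol set" where
  "QP = {p. finite {(i, j, k). p i j k \<noteq> 0}}"

definition qmono :: "nat \<Rightarrow> nat \<Rightarrow> nat \<Rightarrow> qpol" where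
  "qmono i j k = (\<lambda>a b c. if a = i \<and> b = j \<and> c = k then 1 else 0)"

definition qone :: qpol where "qone = qmono 0 0 0"
definition qx :: qpol where "qx = qmono 1 0 0"
definition qy :: qpol where "qy = qmono 0 1 0"
definition qz :: qpol where "qz = qmono 0 0 1"
definition qzero :: qpol where "qzero = (\<lambda>a b c. 0)"

definition qadd :: "qpol \<Rightarrow> qpol \<Rightarrow> qpol" where
  "qadd p r = (\<lambda>i j k. p i j k + r i j k)"

definition qsmul :: "complex \<Rightarrow> qpol \<Rightarrow> qpol" where
  "qsmul c p = (\<lambda>i j k. c * p i j k)"

definition qsub :: "qpol \<Rightarrow> qpol \<Rightarrow> qpol" where
  "qsub p r = (\<lambda>i j k. p i j k - r i j k)"

text \<open>Multiplication: (x^a y^b z^c)(x^d y^e z^f) = q^(bd+cd+ce) x^(a+d) y^(b+e) z^(c+f),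
from yx = q xy, zy = q yz, zx = q xz.\<close>
definition qmul :: "complex \<Rightarrow> qpol \<Rightarrow> qpol \<Rightarrow> qpol" where
  "qmul q p r = (\<lambda>i j k. \<Sum>a\<le>i. \<Sum>b\<le>j. \<Sum>c\<le>k.
      q ^ (b * (i - a) + c * (i - a) + c * (j - b)) * p a b c * r (i - a) (j - b) (k - c))"

definition hcomp :: "nat \<Rightarrow> qpol \<Rightarrow> qpol" where
  "hcomp s p = (\<lambda>i j k. if i + j + k = s then p i j k else 0)"

definition not_root_of_unity :: "complex \<Rightarrow> bool" where
  "not_root_of_unity q \<longleftrightarrow> q \<noteq> 0 \<and> (\<forall>n::int. n \<noteq> 0 \<longrightarrow> q powi n \<noteq> 1)"

definition qlin :: "(qpol \<Rightarrow> qpol) \<Rightarrow> bool" where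
  "qlin f \<longleftrightarrow> f ` QP \<subseteq> QP \<and>
     (\<forall>p\<in>QP. \<forall>r\<in>QP. f (qadd p r) = qadd (f p) (f r)) \<and>
     (\<forall>c. \<forall>p\<in>QP. f (qsmul c p) = qsmul c (f p))"

text \<open>An X_q(A_1)-module algebra structure on C_q[x,y,z], given by the images
E, F, K1, K1i (= K1^{-1}), K2, K2i (= K2^{-1}) of the generators: they are linear,
satisfy the defining relations of X_q(A_1) (so that they define an algebra
homomorphism X_q(A_1) -> End(A)) and the module-algebra compatibility conditions
for the generators (w.r.t. the coproduct and counit).\<close>
definition Xq_modalg ::
  "complex \<Rightarrow> (qpol \<Rightarrow> qpol) \<Rightarrow> (qpol \<Rightarrow> qpol) \<Rightarrow> (qpol \<Rightarrow> qpol) \<Rightarrow> (qpol \<Rightarrow> qpol)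
     \<Rightarrow> (qpol \<Rightarrow> qpol) \<Rightarrow> (qpol \<Rightarrow> qpol) \<Rightarrow> bool" where
  "Xq_modalg q E F K1 K1i K2 K2i \<longleftrightarrow>
     qlin E \<and> qlin F \<and> qlin K1 \<and> qlin K1i \<and> qlin K2 \<and> qlin K2i \<and>
     (\<forall>p\<in>QP.
        K1 (K1i p) = p \<and> K1i (K1 p) = p \<and> K2 (K2i p) = p \<and> K2i (K2 p) = p \<and>
        K1 (K2 p) = K2 (K1 p) \<and>
        K1 (E p) = qsmul (inverse q) (E (K1 p)) \<and>
        K1 (F p) = qsmul q (F (K1 p)) \<and>
        K2 (E p) = qsmul (- inverse q) (E (K2 p)) \<and>
        K2 (F p) = qsmul (- q) (F (K2 p)) \<and>
        qsub (E (F p)) (F (E p)) =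
          qsmul (1 / (q - inverse q)) (qsub (K2 (K1i p)) (K2i (K1 p))) \<and>
        E (E p) = qzero \<and> F (F p) = qzero) \<and>
     (\<forall>a\<in>QP. \<forall>b\<in>QP.
        K1 (qmul q a b) = qmul q (K1 a) (K1 b) \<and>
        K1i (qmul q a b) = qmul q (K1i a) (K1i b) \<and>
        K2 (qmul q a b) = qmul q (K2 a) (K2 b) \<and>
        K2i (qmul q a b) = qmul q (K2i a) (K2i b) \<and>
        E (qmul q a b) = qadd (qmul q (E a) b) (qmul q (K2 (K1i a)) (E b)) \<and>
        F (qmul q a b) = qadd (qmul q a (F b)) (qmul q (F a) (K2i (K1 b)))) \<and>
     K1 qone = qone \<and> K1i qone = qone \<and> K2 qone = qone \<and> K2i qone = qone \<and>
     E qone = qzero \<and> F qone = qzero"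

end

theory Submission
  imports Defs
begin


definition supp :: "qpol \<Rightarrow> (nat\<times>nat\<times>nat) set" where
  "supp p = {(i, j, k). p i j k \<noteq> 0}"

lemma QP_supp: "p \<in> QP \<longleftrightarrow> finite (supp p)"
  by (simp add: QP_def supp_def)

lemma qmono_QP[simp]: "qmono i j k \<in> QP"
proof -
  have "supp (qmono i j k) = {(i,j,k)}" by (auto simp: supp_def qmono_def)
  thus ?thesis by (simp add: QP_supp)
qed

lemma gens_QP[simp]: "qx \<in> QP" "qy \<in> QP" "qz \<in> QP" "qone \<in> QP" "qzero \<in> QP"
  by (simp_all add: qx_def qy_def qz_def qone_def) (auto simp: qzero_def QP_def intro: finite_subset[of _ "{}"])

lemma qadd_QP[simp]: "p \<in> QP \<Longrightarrow> r \<in> QP \<Longrightarrow> qadd p r \<in> QP"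
  unfolding QP_supp
  by (rule finite_subset[of _ "supp p \<union> supp r"]) (auto simp: supp_def qadd_def)

lemma qsmul_QP[simp]: "p \<in> QP \<Longrightarrow> qsmul c p \<in> QP"
  unfolding QP_supp
  by (rule finite_subset[of _ "supp p"]) (auto simp: supp_def qsmul_def)

lemma qmul_QP[simp]: assumes "p \<in> QP" "r \<in> QP" shows "qmul q p r \<in> QP"
proof -
  let ?f = "\<lambda>((a::nat,b::nat,c::nat),(d::nat,e::nat,f::nat)). (a+d,b+e,c+f)"
  have "supp (qmul q p r) \<subseteq> ?f ` (supp p \<times> supp r)"
  proof
    fix v assume "v \<in> supp (qmul q p r)"
    then obtain i j k where v: "v = (i,j,k)" and nz: "qmul q p r i j k \<noteq> 0"
      by (auto simp: supp_def)
    from nz obtain a where a: "a \<le> i" "(\<Sum>b\<le>j. \<Sum>c\<le>k.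
      q ^ (b * (i - a) + c * (i - a) + c * (j - b)) * p a b c * r (i - a) (j - b) (k - c)) \<noteq> 0"
      unfolding qmul_def by (meson atMost_iff sum.neutral)
    then obtain b where b: "b \<le> j" "(\<Sum>c\<le>k.
      q ^ (b * (i - a) + c * (i - a) + c * (j - b)) * p a b c * r (i - a) (j - b) (k - c)) \<noteq> 0"
      by (meson atMost_iff sum.neutral)
    then obtain c where c: "c \<le> k" "q ^ (b * (i - a) + c * (i - a) + c * (j - b)) * p a b c * r (i - a) (j - b) (k - c) \<noteq> 0"
      by (meson atMost_iff sum.neutral)
    hence "(a,b,c) \<in> supp p" "(i-a,j-b,k-c) \<in> supp r" by (auto simp: supp_def)
    moreover have "v = ?f ((a,b,c),(i-a,j-b,k-c))" using a b c v by auto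
    ultimately show "v \<in> ?f ` (supp p \<times> supp r)" by blast
  qed
  thus ?thesis using assms unfolding QP_supp by (meson finite_SigmaI finite_imageI finite_subset)
qed

lemma sum_if_const: "(\<Sum>c\<in>S. if P then f c else 0) = (if P then sum f S else 0)"
  by auto

lemma sum1_delta:
  "(\<Sum>c\<le>(k::nat). if c = C \<and> P then g c else (0::complex)) = (if C \<le> k \<and> P then g C else 0)"
proof -
  have "(\<Sum>c\<le>k. if c = C \<and> P then g c else (0::complex)) = (\<Sum>c\<le>k. if c = C then (if P then g c else 0) else 0)"
    by (intro sum.cong) auto
  thus ?thesis by simp
qed

lemma sum2_delta:
  "(\<Sum>b\<le>(j::nat). \<Sum>c\<le>(k::nat). if b = B \<and> c = C \<and> P then g b c else (0::complex))
   = (if B \<le> j \<and> C \<le> k \<and> P then g B C else 0)"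
proof -
  have "(\<Sum>b\<le>j. \<Sum>c\<le>k. if b = B \<and> c = C \<and> P then g b c else (0::complex))
    = (\<Sum>b\<le>j. if b = B then (\<Sum>c\<le>k. if c = C \<and> P then g b c else 0) else 0)"
    by (intro sum.cong) (auto simp: sum_if_const)
  thus ?thesis by (simp add: sum1_delta)
qed

lemma sum3_delta:
  "(\<Sum>a\<le>(i::nat). \<Sum>b\<le>(j::nat). \<Sum>c\<le>(k::nat). if a = A \<and> b = B \<and> c = C \<and> P then g a b c else (0::complex))
   = (if A \<le> i \<and> B \<le> j \<and> C \<le> k \<and> P then g A B C else 0)"
proof -
  have "(\<Sum>a\<le>i. \<Sum>b\<le>j. \<Sum>c\<le>k. if a = A \<and> b = B \<and> c = C \<and> P then g a b c else (0::complex))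
    = (\<Sum>a\<le>i. if a = A then (\<Sum>b\<le>j. \<Sum>c\<le>k. if b = B \<and> c = C \<and> P then g a b c else 0) else 0)"
    by (intro sum.cong) (auto simp: sum_if_const)
  also have "\<dots> = (\<Sum>a\<le>i. if a = A then (if B \<le> j \<and> C \<le> k \<and> P then g a B C else 0) else 0)"
    by (simp only: sum2_delta)
  finally show ?thesis by simp
qed

lemma qmul_mono_left:
  "qmul q (qmono d e f) r i j k = (if d \<le> i \<and> e \<le> j \<and> f \<le> k then
     q^(e*(i-d) + f*(i-d) + f*(j-e)) * r (i-d) (j-e) (k-f) else 0)"
proof -
  have "qmul q (qmono d e f) r i j k = (\<Sum>a\<le>i. \<Sum>b\<le>j. \<Sum>c\<le>k.
     if a = d \<and> b = e \<and> c = f \<and> True then q^(b*(i-a) + c*(i-a) + c*(j-b)) * r (i-a) (j-b) (k-c) else 0)"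
    unfolding qmul_def qmono_def by (intro sum.cong refl) auto
  thus ?thesis by (simp only: sum3_delta) simp
qed

lemma qmul_mono_right:
  "qmul q p (qmono d e f) i j k = (if d \<le> i \<and> e \<le> j \<and> f \<le> k then
     q^((j-e)*d + (k-f)*d + (k-f)*e) * p (i-d) (j-e) (k-f) else 0)"
proof -
  have "qmul q p (qmono d e f) i j k = (\<Sum>a\<le>i. \<Sum>b\<le>j. \<Sum>c\<le>k.
     if a = i - d \<and> b = j - e \<and> c = k - f \<and> (d \<le> i \<and> e \<le> j \<and> f \<le> k) then
       q^(b*(i-a) + c*(i-a) + c*(j-b)) * p a b c else 0)"
    unfolding qmul_def qmono_def by (intro sum.cong refl) auto
  thus ?thesis by (simp only: sum3_delta) simp
qed

lemma qmul_add_left: "qmul q (qadd a b) r = qadd (qmul q a r) (qmul q b r)"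
  unfolding qmul_def qadd_def by (simp add: algebra_simps sum.distrib)
lemma qmul_add_right: "qmul q r (qadd a b) = qadd (qmul q r a) (qmul q r b)"
  unfolding qmul_def qadd_def by (simp add: algebra_simps sum.distrib)
lemma qmul_smul_left: "qmul q (qsmul c a) r = qsmul c (qmul q a r)"
  unfolding qmul_def qsmul_def by (simp add: algebra_simps sum_distrib_left)
lemma qmul_smul_right: "qmul q r (qsmul c a) = qsmul c (qmul q r a)"
  unfolding qmul_def qsmul_def by (simp add: algebra_simps sum_distrib_left)

definition xz :: qpol where "xz = qmono 1 0 1"

lemma xz_eq: "qmul q qx qz = xz"
  unfolding xz_def qx_def qz_def by (rule ext)+ (simp only: qmul_mono_left, auto simp: qmono_def)

definition ordge :: "nat \<Rightarrow> qpol \<Rightarrow> bool" where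
  "ordge d p \<longleftrightarrow> (\<forall>i j k. i + j + k < d \<longrightarrow> p i j k = 0)"

lemma ordge_0[simp]: "ordge 0 p" by (simp add: ordge_def)

lemma ordge_add: "ordge d p \<Longrightarrow> ordge d r \<Longrightarrow> ordge d (qadd p r)"
  by (simp add: ordge_def qadd_def)
lemma ordge_smul: "ordge d p \<Longrightarrow> ordge d (qsmul c p)"
  by (simp add: ordge_def qsmul_def)

lemma ordge_mul: assumes "ordge d p" "ordge e r" shows "ordge (d + e) (qmul q p r)"
  unfolding ordge_def
proof (intro allI impI)
  fix i j k assume ijk: "i + j + k < d + e"
  show "qmul q p r i j k = 0" unfolding qmul_def
  proof (intro sum.neutral ballI)
    fix a b c assume "a \<in> {..i}" "b \<in> {..j}" "c \<in> {..k}"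
    hence "a + b + c < d \<or> (i - a) + (j - b) + (k - c) < e" using ijk by auto
    thus "q ^ (b * (i - a) + c * (i - a) + c * (j - b)) * p a b c * r (i - a) (j - b) (k - c) = 0"
      using assms unfolding ordge_def by auto
  qed
qed

definition dx :: "qpol \<Rightarrow> qpol" where "dx p = (\<lambda>i j k. p (Suc i) j k)"
definition dy :: "qpol \<Rightarrow> qpol" where "dy p = (\<lambda>i j k. if i = 0 then p 0 (Suc j) k else 0)"
definition dz :: "qpol \<Rightarrow> qpol" where "dz p = (\<lambda>i j k. if i = 0 \<and> j = 0 then p 0 0 (Suc k) else 0)"

lemma d_QP: assumes "p \<in> QP" shows "dx p \<in> QP" "dy p \<in> QP" "dz p \<in> QP"
proof -
  have f: "finite (supp p)" using assms QP_supp by auto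
  have "supp (dx p) \<subseteq> (\<lambda>(i,j,k). (i - 1, j, k)) ` supp p"
  proof
    fix v assume "v \<in> supp (dx p)"
    then obtain a b c where v: "v = (a,b,c)" "p (Suc a) b c \<noteq> 0" by (auto simp: supp_def dx_def)
    show "v \<in> (\<lambda>(i,j,k). (i - 1, j, k)) ` supp p"
      by (rule image_eqI[of _ _ "(Suc a,b,c)"]) (use v in \<open>auto simp: supp_def\<close>)
  qed
  thus "dx p \<in> QP" using f QP_supp finite_subset by blast
  have "supp (dy p) \<subseteq> (\<lambda>(i,j,k). (i, j - 1, k)) ` supp p"
  proof
    fix v assume "v \<in> supp (dy p)"
    then obtain b c where v: "v = (0,b,c)" "p 0 (Suc b) c \<noteq> 0" by (auto simp: supp_def dy_def split: if_splits)
    show "v \<in> (\<lambda>(i,j,k). (i, j - 1, k)) ` supp p"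
      by (rule image_eqI[of _ _ "(0,Suc b,c)"]) (use v in \<open>auto simp: supp_def\<close>)
  qed
  thus "dy p \<in> QP" using f QP_supp finite_subset by blast
  have "supp (dz p) \<subseteq> (\<lambda>(i,j,k). (i, j, k - 1)) ` supp p"
  proof
    fix v assume "v \<in> supp (dz p)"
    then obtain c where v: "v = (0,0,c)" "p 0 0 (Suc c) \<noteq> 0" by (auto simp: supp_def dz_def split: if_splits)
    show "v \<in> (\<lambda>(i,j,k). (i, j, k - 1)) ` supp p"
      by (rule image_eqI[of _ _ "(0,0,Suc c)"]) (use v in \<open>auto simp: supp_def\<close>)
  qed
  thus "dz p \<in> QP" using f QP_supp finite_subset by blast
qed

lemma d_ord: assumes "ordge (Suc d) p" shows "ordge d (dx p)" "ordge d (dy p)" "ordge d (dz p)"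
  using assms by (auto simp: ordge_def dx_def dy_def dz_def)

lemma decomp: "p = qadd (qsmul (p 0 0 0) qone)
   (qadd (qmul q qx (dx p)) (qadd (qmul q qy (dy p)) (qmul q qz (dz p))))"
proof (intro ext)
  fix i j k
  show "p i j k = qadd (qsmul (p 0 0 0) qone)
   (qadd (qmul q qx (dx p)) (qadd (qmul q qy (dy p)) (qmul q qz (dz p)))) i j k"
    unfolding qx_def qy_def qz_def qadd_def qsmul_def qmul_mono_left
    by (cases i; cases j; cases k) (auto simp: qone_def qmono_def dx_def dy_def dz_def)
qed

lemma qlin_add: "qlin K \<Longrightarrow> p \<in> QP \<Longrightarrow> r \<in> QP \<Longrightarrow> K (qadd p r) = qadd (K p) (K r)"
  by (simp add: qlin_def)
lemma qlin_smul: "qlin K \<Longrightarrow> p \<in> QP \<Longrightarrow> K (qsmul c p) = qsmul c (K p)"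
  by (simp add: qlin_def)
lemma qlin_QP: "qlin K \<Longrightarrow> p \<in> QP \<Longrightarrow> K p \<in> QP"
  by (auto simp: qlin_def)

lemma K_step:
  assumes lin: "qlin K" and mul: "\<forall>a\<in>QP. \<forall>b\<in>QP. K (qmul q a b) = qmul q (K a) (K b)"
    and ox: "ordge 1 (K qx)" and oy: "ordge 1 (K qy)" and oz: "ordge 1 (K qz)"
    and IH: "\<forall>r\<in>QP. ordge d r \<longrightarrow> ordge d (K r)"
  shows "\<forall>p\<in>QP. ordge (Suc d) p \<longrightarrow> ordge (Suc d) (K p)"
proof (intro ballI impI)
  fix p assume p: "p \<in> QP" and o: "ordge (Suc d) p"
  have p0: "p 0 0 0 = 0" using o by (simp add: ordge_def)
  note dq = d_QP[OF p]
  have od: "ordge d (K (dx p))" "ordge d (K (dy p))" "ordge d (K (dz p))"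
    using IH dq d_ord[OF o] by auto
  have "K p = K (qadd (qsmul (p 0 0 0) qone)
      (qadd (qmul q qx (dx p)) (qadd (qmul q qy (dy p)) (qmul q qz (dz p)))))"
    using decomp[of p q] by simp
  also have "\<dots> = qadd (qsmul 0 (K qone))
      (qadd (qmul q (K qx) (K (dx p))) (qadd (qmul q (K qy) (K (dy p))) (qmul q (K qz) (K (dz p)))))"
    using dq mul p0 by (simp add: qlin_add[OF lin] qlin_smul[OF lin])
  finally have Kp: "K p = \<dots>" .
  have z: "ordge (Suc d) (qsmul 0 (K qone))" by (simp add: ordge_def qsmul_def)
  show "ordge (Suc d) (K p)" unfolding Kp
    using ordge_mul[OF ox od(1), of q] ordge_mul[OF oy od(2), of q] ordge_mul[OF oz od(3), of q] z
    by (simp add: ordge_add)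
qed

lemma K_ord2:
  assumes lin: "qlin K" and mul: "\<forall>a\<in>QP. \<forall>b\<in>QP. K (qmul q a b) = qmul q (K a) (K b)"
    and ox: "ordge 1 (K qx)" and oy: "ordge 1 (K qy)" and oz: "ordge 1 (K qz)"
  shows "\<forall>p\<in>QP. ordge 2 p \<longrightarrow> ordge 2 (K p)"
proof -
  have "\<forall>p\<in>QP. ordge (Suc 0) p \<longrightarrow> ordge (Suc 0) (K p)"
    by (rule K_step[OF assms]) simp
  from K_step[OF assms this] show ?thesis by (simp add: numeral_2_eq_2)
qed

definition hi :: "qpol \<Rightarrow> qpol" where "hi p = (\<lambda>i j k. if i + j + k \<le> 1 then 0 else p i j k)"

lemma hi_QP: "p \<in> QP \<Longrightarrow> hi p \<in> QP"
  unfolding QP_supp by (rule finite_subset[of _ "supp p"]) (auto simp: supp_def hi_def)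

lemma hi_ord: "ordge 2 (hi p)" by (simp add: ordge_def hi_def)

lemma decomp2: "p = qadd (qadd (qsmul (p 0 0 0) qone) (qadd (qsmul (p 1 0 0) qx)
   (qadd (qsmul (p 0 1 0) qy) (qsmul (p 0 0 1) qz)))) (hi p)"
proof (intro ext)
  fix i j k
  show "p i j k = qadd (qadd (qsmul (p 0 0 0) qone) (qadd (qsmul (p 1 0 0) qx)
   (qadd (qsmul (p 0 1 0) qy) (qsmul (p 0 0 1) qz)))) (hi p) i j k"
    unfolding qx_def qy_def qz_def qadd_def qsmul_def hi_def qone_def qmono_def
    by (cases i; cases j; cases k) auto
qed

lemma K_low:
  assumes lin: "qlin K" and mul: "\<forall>a\<in>QP. \<forall>b\<in>QP. K (qmul q a b) = qmul q (K a) (K b)"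
    and one: "K qone = qone" and Kx: "K qx = qsmul \<alpha> qx"
    and Ky: "K qy = qadd (qsmul \<beta> qy) (qsmul t (qmul q qx qz))"
    and Kz: "K qz = qsmul \<gamma> qz" and p: "p \<in> QP"
  shows "K p 0 0 0 = p 0 0 0" "K p 1 0 0 = \<alpha> * p 1 0 0" "K p 0 1 0 = \<beta> * p 0 1 0"
    "K p 0 0 1 = \<gamma> * p 0 0 1"
proof -
  have ox: "ordge 1 (K qx)" "ordge 1 (K qy)" "ordge 1 (K qz)"
    unfolding Kx Ky Kz xz_eq by (auto simp: ordge_def qsmul_def qadd_def qx_def qy_def qz_def xz_def qmono_def)
  have oh: "ordge 2 (K (hi p))" using K_ord2[OF lin mul ox] hi_QP[OF p] hi_ord by blast
  have "K p = K (qadd (qadd (qsmul (p 0 0 0) qone) (qadd (qsmul (p 1 0 0) qx)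
   (qadd (qsmul (p 0 1 0) qy) (qsmul (p 0 0 1) qz)))) (hi p))"
    using decomp2[of p] by simp
  also have "\<dots> = qadd (qadd (qsmul (p 0 0 0) qone) (qadd (qsmul (p 1 0 0) (K qx))
   (qadd (qsmul (p 0 1 0) (K qy)) (qsmul (p 0 0 1) (K qz))))) (K (hi p))"
    using hi_QP[OF p] one by (simp add: qlin_add[OF lin] qlin_smul[OF lin])
  finally have Kp: "K p = \<dots>" .
  have h: "K (hi p) 0 0 0 = 0" "K (hi p) 1 0 0 = 0" "K (hi p) 0 1 0 = 0" "K (hi p) 0 0 1 = 0"
    using oh unfolding ordge_def by auto
  show "K p 0 0 0 = p 0 0 0" "K p 1 0 0 = \<alpha> * p 1 0 0" "K p 0 1 0 = \<beta> * p 0 1 0"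
    "K p 0 0 1 = \<gamma> * p 0 0 1"
    unfolding Kp Kx Ky Kz xz_eq using h
    by (simp_all add: qadd_def qsmul_def qone_def qx_def qy_def qz_def xz_def qmono_def)
qed

lemma qsmul_qsmul: "qsmul a (qsmul b p) = qsmul (a * b) p"
  by (simp add: qsmul_def mult.assoc)
lemma qsmul_1: "qsmul 1 p = p" by (simp add: qsmul_def)
lemma qmono_apply: "qmono a b c i j k = (if i = a \<and> j = b \<and> k = c then 1 else 0)"
  by (simp add: qmono_def)
lemma xz_QP[simp]: "xz \<in> QP" by (simp add: xz_def)

lemma qyqx: "qmul q qy qx = qsmul q (qmul q qx qy)"
  unfolding qx_def qy_def by (rule ext)+ (simp add: qmul_mono_left qsmul_def qmono_apply)
lemma qzqx: "qmul q qz qx = qsmul q (qmul q qx qz)"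
  unfolding qx_def qz_def by (rule ext)+ (simp add: qmul_mono_left qsmul_def qmono_apply)
lemma qzqy: "qmul q qz qy = qsmul q (qmul q qy qz)"
  unfolding qy_def qz_def by (rule ext)+ (simp add: qmul_mono_left qsmul_def qmono_apply)

lemmas lin_rules = qmul_add_left qmul_add_right qmul_smul_left qmul_smul_right
lemmas eval_rules = qadd_def qsmul_def qx_def qy_def qz_def xz_def qmul_mono_left qmul_mono_right qmono_apply

lemma canc: "c * a = a \<Longrightarrow> a \<noteq> 0 \<Longrightarrow> (c::complex) = 1"
  by simp

lemma hcomp1_eq: "hcomp 1 p = (\<lambda>i j k. if i = 1 \<and> j = 0 \<and> k = 0 then p 1 0 0 else
   if i = 0 \<and> j = 1 \<and> k = 0 then p 0 1 0 else if i = 0 \<and> j = 0 \<and> k = 1 then p 0 0 1 else 0)"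
proof (intro ext)
  fix i j k :: nat
  have "i + j + k = 1 \<longleftrightarrow> (i = 1 \<and> j = 0 \<and> k = 0) \<or> (i = 0 \<and> j = 1 \<and> k = 0) \<or> (i = 0 \<and> j = 0 \<and> k = 1)"
    by arith
  thus "hcomp 1 p i j k = (if i = 1 \<and> j = 0 \<and> k = 0 then p 1 0 0 else
   if i = 0 \<and> j = 1 \<and> k = 0 then p 0 1 0 else if i = 0 \<and> j = 0 \<and> k = 1 then p 0 0 1 else 0)"
    unfolding hcomp_def by auto
qed



theorem lemma3p3:
  fixes q \<alpha>1 \<alpha>2 \<beta>1 \<beta>2 \<gamma>1 \<gamma>2 t1 t2 :: complex
    and E F K1 K1i K2 K2i :: "qpol \<Rightarrow> qpol"
  assumes hq: "not_root_of_unity q"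
    and hpi: "Xq_modalg q E F K1 K1i K2 K2i"
    and hnz: "\<alpha>1 \<noteq> 0" "\<alpha>2 \<noteq> 0" "\<beta>1 \<noteq> 0" "\<beta>2 \<noteq> 0" "\<gamma>1 \<noteq> 0" "\<gamma>2 \<noteq> 0"
             "t1 \<noteq> 0" "t2 \<noteq> 0"
    and hK1: "K1 qx = qsmul \<alpha>1 qx" "K1 qy = qadd (qsmul \<beta>1 qy) (qsmul t1 (qmul q qx qz))"
             "K1 qz = qsmul \<gamma>1 qz"
    and hK2: "K2 qx = qsmul \<alpha>2 qx" "K2 qy = qadd (qsmul \<beta>2 qy) (qsmul t2 (qmul q qx qz))"
             "K2 qz = qsmul \<gamma>2 qz"
  defines "a0 \<equiv> E qx 0 0 0" and "c0 \<equiv> E qz 0 0 0"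
    and "a0' \<equiv> F qx 0 0 0" and "c0' \<equiv> F qz 0 0 0"
  shows
    "(a0 \<noteq> 0 \<longrightarrow>
        \<alpha>1 = q \<and> \<alpha>2 = - q \<and> inverse \<beta>1 * \<beta>2 = q \<and> inverse \<gamma>1 * \<gamma>2 = q \<and>
        hcomp 1 (E qx) = qzero \<and>
        hcomp 1 (E qy) = qsmul (- (a0 * (t2 + q * t1)) / (2 * q * \<beta>1)) qz) \<and>
     (c0 \<noteq> 0 \<longrightarrow>
        \<gamma>1 = q \<and> \<gamma>2 = - q \<and> inverse \<beta>1 * \<beta>2 = inverse q \<and> inverse \<alpha>1 * \<alpha>2 = inverse q \<and>
        hcomp 1 (E qz) = qzero \<and>
        hcomp 1 (E qy) = qsmul (- (c0 * (t1 + q * t2)) / (2 * q * \<beta>1)) qx) \<and>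
     (a0' \<noteq> 0 \<longrightarrow>
        \<alpha>1 = inverse q \<and> \<alpha>2 = - inverse q \<and> \<beta>1 * inverse \<beta>2 = inverse q \<and>
        \<gamma>1 * inverse \<gamma>2 = inverse q \<and>
        hcomp 1 (F qx) = qzero \<and>
        hcomp 1 (F qy) = qsmul (a0' * (t2 - q * t1) / (2 * q * \<alpha>2 * \<gamma>2)) qz) \<and>
     (c0' \<noteq> 0 \<longrightarrow>
        \<gamma>1 = inverse q \<and> \<gamma>2 = - inverse q \<and> \<beta>1 * inverse \<beta>2 = q \<and> \<alpha>1 * inverse \<alpha>2 = q \<and>
        hcomp 1 (F qz) = qzero \<and>
        hcomp 1 (F qy) = qsmul (c0' * (q * t2 - t1) / (2 * q * \<alpha>2 * \<gamma>2)) qx)"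
proof -
  have q0: "q \<noteq> 0" using hq by (simp add: not_root_of_unity_def)
  have nr: "\<forall>n::int. n \<noteq> 0 \<longrightarrow> q powi n \<noteq> 1" using hq by (simp add: not_root_of_unity_def)
  have "q powi 1 \<noteq> 1" "q powi 2 \<noteq> 1" using nr[rule_format, of 1] nr[rule_format, of 2] by simp_all
  hence q1: "q \<noteq> 1" and q2: "q * q \<noteq> 1" by (simp_all add: power2_eq_square)
  have qm1: "q \<noteq> -1" using q2 by auto
  note H = hpi[unfolded Xq_modalg_def]
  have lin: "qlin E" "qlin F" "qlin K1" "qlin K1i" "qlin K2" "qlin K2i" using H by blast+
  have rel: "\<forall>p\<in>QP.
        K1 (K1i p) = p \<and> K1i (K1 p) = p \<and> K2 (K2i p) = p \<and> K2i (K2 p) = p \<and>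
        K1 (E p) = qsmul (inverse q) (E (K1 p)) \<and>
        K1 (F p) = qsmul q (F (K1 p)) \<and>
        K2 (E p) = qsmul (- inverse q) (E (K2 p)) \<and>
        K2 (F p) = qsmul (- q) (F (K2 p))" using H by blast
  have mul: "\<forall>a\<in>QP. \<forall>b\<in>QP.
        K1 (qmul q a b) = qmul q (K1 a) (K1 b) \<and>
        K1i (qmul q a b) = qmul q (K1i a) (K1i b) \<and>
        K2 (qmul q a b) = qmul q (K2 a) (K2 b) \<and>
        K2i (qmul q a b) = qmul q (K2i a) (K2i b) \<and>
        E (qmul q a b) = qadd (qmul q (E a) b) (qmul q (K2 (K1i a)) (E b)) \<and>
        F (qmul q a b) = qadd (qmul q a (F b)) (qmul q (F a) (K2i (K1 b)))" using H by blast
  have one: "K1 qone = qone" "K2 qone = qone" using H by blast+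
  have mulK1: "\<forall>a\<in>QP. \<forall>b\<in>QP. K1 (qmul q a b) = qmul q (K1 a) (K1 b)"
   and mulK2: "\<forall>a\<in>QP. \<forall>b\<in>QP. K2 (qmul q a b) = qmul q (K2 a) (K2 b)" using mul by blast+
  have QPs: "E qx \<in> QP" "E qy \<in> QP" "E qz \<in> QP" "F qx \<in> QP" "F qy \<in> QP" "F qz \<in> QP"
    using lin by (simp_all add: qlin_QP)
  note low1 = K_low[OF lin(3) mulK1 one(1) hK1]
  note low2 = K_low[OF lin(5) mulK2 one(2) hK2]
  note hK1' = hK1[unfolded xz_eq] and hK2' = hK2[unfolded xz_eq]
  have K1xz: "K1 xz = qsmul (\<alpha>1 * \<gamma>1) xz"
  proof -
    have "K1 xz = K1 (qmul q qx qz)" by (simp add: xz_eq)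
    also have "\<dots> = qmul q (K1 qx) (K1 qz)" using mulK1 by simp
    finally show ?thesis by (simp add: hK1 lin_rules qsmul_qsmul xz_eq mult.commute)
  qed
  have K2xz: "K2 xz = qsmul (\<alpha>2 * \<gamma>2) xz"
  proof -
    have "K2 xz = K2 (qmul q qx qz)" by (simp add: xz_eq)
    also have "\<dots> = qmul q (K2 qx) (K2 qz)" using mulK2 by simp
    finally show ?thesis by (simp add: hK2 lin_rules qsmul_qsmul xz_eq mult.commute)
  qed
  have inv1: "\<And>w. w \<in> QP \<Longrightarrow> K1i (K1 w) = w" and inv2: "\<And>w. w \<in> QP \<Longrightarrow> K2i (K2 w) = w"
    using rel by blast+
  have K1ix: "K1i qx = qsmul (inverse \<alpha>1) qx"
  proof -
    have "K1 (qsmul (inverse \<alpha>1) qx) = qx"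
      using hnz by (simp add: qlin_smul[OF lin(3)] hK1 qsmul_qsmul qsmul_1)
    thus ?thesis using inv1[of "qsmul (inverse \<alpha>1) qx"] by simp
  qed
  have K1iz: "K1i qz = qsmul (inverse \<gamma>1) qz"
  proof -
    have "K1 (qsmul (inverse \<gamma>1) qz) = qz"
      using hnz by (simp add: qlin_smul[OF lin(3)] hK1 qsmul_qsmul qsmul_1)
    thus ?thesis using inv1[of "qsmul (inverse \<gamma>1) qz"] by simp
  qed
  have K2ix: "K2i qx = qsmul (inverse \<alpha>2) qx"
  proof -
    have "K2 (qsmul (inverse \<alpha>2) qx) = qx"
      using hnz by (simp add: qlin_smul[OF lin(5)] hK2 qsmul_qsmul qsmul_1)
    thus ?thesis using inv2[of "qsmul (inverse \<alpha>2) qx"] by simp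
  qed
  have K2iz: "K2i qz = qsmul (inverse \<gamma>2) qz"
  proof -
    have "K2 (qsmul (inverse \<gamma>2) qz) = qz"
      using hnz by (simp add: qlin_smul[OF lin(5)] hK2 qsmul_qsmul qsmul_1)
    thus ?thesis using inv2[of "qsmul (inverse \<gamma>2) qz"] by simp
  qed
  have K1iy: "K1i qy = qadd (qsmul (inverse \<beta>1) qy) (qsmul (- t1 * inverse (\<beta>1 * \<alpha>1 * \<gamma>1)) xz)"
    (is "_ = ?w")
  proof -
    have "K1 ?w = qadd (qsmul (inverse \<beta>1) (K1 qy)) (qsmul (- t1 * inverse (\<beta>1 * \<alpha>1 * \<gamma>1)) (K1 xz))"
      by (simp add: qlin_smul[OF lin(3)] qlin_add[OF lin(3)])
    also have "\<dots> = qy" unfolding hK1' K1xz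
      by (rule ext)+ (use hnz in \<open>simp add: qadd_def qsmul_def field_simps\<close>)
    finally show ?thesis using inv1[of ?w] by simp
  qed
  have K2iy: "K2i qy = qadd (qsmul (inverse \<beta>2) qy) (qsmul (- t2 * inverse (\<beta>2 * \<alpha>2 * \<gamma>2)) xz)"
    (is "_ = ?w")
  proof -
    have "K2 ?w = qadd (qsmul (inverse \<beta>2) (K2 qy)) (qsmul (- t2 * inverse (\<beta>2 * \<alpha>2 * \<gamma>2)) (K2 xz))"
      by (simp add: qlin_smul[OF lin(5)] qlin_add[OF lin(5)])
    also have "\<dots> = qy" unfolding hK2' K2xz
      by (rule ext)+ (use hnz in \<open>simp add: qadd_def qsmul_def field_simps\<close>)
    finally show ?thesis using inv2[of ?w] by simp
  qed
  have K2ixz: "K2i xz = qsmul (inverse (\<alpha>2 * \<gamma>2)) xz"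
  proof -
    have "K2 (qsmul (inverse (\<alpha>2 * \<gamma>2)) xz) = xz"
      using hnz by (simp add: qlin_smul[OF lin(5)] K2xz qsmul_qsmul qsmul_1 field_simps)
    thus ?thesis using inv2[of "qsmul (inverse (\<alpha>2 * \<gamma>2)) xz"] by simp
  qed
  have GEx: "K2 (K1i qx) = qsmul (\<alpha>2 / \<alpha>1) qx"
    by (simp add: K1ix qlin_smul[OF lin(5)] hK2 qsmul_qsmul field_simps)
  have GEz: "K2 (K1i qz) = qsmul (\<gamma>2 / \<gamma>1) qz"
    by (simp add: K1iz qlin_smul[OF lin(5)] hK2 qsmul_qsmul field_simps)
  have GEy: "K2 (K1i qy) = qadd (qsmul (\<beta>2 / \<beta>1) qy)
      (qsmul ((t2 * \<alpha>1 * \<gamma>1 - t1 * \<alpha>2 * \<gamma>2) / (\<beta>1 * \<alpha>1 * \<gamma>1)) xz)"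
    unfolding K1iy
    by (simp add: qlin_smul[OF lin(5)] qlin_add[OF lin(5)] hK2' K2xz, (rule ext)+)
       (use hnz in \<open>simp add: qadd_def qsmul_def field_simps\<close>)
  have GFx: "K2i (K1 qx) = qsmul (\<alpha>1 / \<alpha>2) qx"
    by (simp add: K2ix qlin_smul[OF lin(6)] hK1 qsmul_qsmul field_simps)
  have GFz: "K2i (K1 qz) = qsmul (\<gamma>1 / \<gamma>2) qz"
    by (simp add: K2iz qlin_smul[OF lin(6)] hK1 qsmul_qsmul field_simps)
  have GFy: "K2i (K1 qy) = qadd (qsmul (\<beta>1 / \<beta>2) qy)
      (qsmul ((t1 * \<beta>2 - \<beta>1 * t2) / (\<beta>2 * \<alpha>2 * \<gamma>2)) xz)"
    unfolding hK1'
    by (simp add: qlin_smul[OF lin(6)] qlin_add[OF lin(6)] K2iy K2ixz, (rule ext)+)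
       (use hnz in \<open>simp add: qadd_def qsmul_def field_simps\<close>)
  have qxy_QP: "qmul q qx qy \<in> QP" "qmul q qx qz \<in> QP" "qmul q qy qz \<in> QP" by simp_all
  have EQyx: "qadd (qmul q (E qy) qx) (qmul q (K2 (K1i qy)) (E qx)) =
      qsmul q (qadd (qmul q (E qx) qy) (qmul q (K2 (K1i qx)) (E qy)))"
    using mul qyqx qlin_smul[OF lin(1) qxy_QP(1)] by (metis gens_QP)
  have EQzx: "qadd (qmul q (E qz) qx) (qmul q (K2 (K1i qz)) (E qx)) =
      qsmul q (qadd (qmul q (E qx) qz) (qmul q (K2 (K1i qx)) (E qz)))"
    using mul qzqx qlin_smul[OF lin(1) qxy_QP(2)] by (metis gens_QP)
  have EQzy: "qadd (qmul q (E qz) qy) (qmul q (K2 (K1i qz)) (E qy)) =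
      qsmul q (qadd (qmul q (E qy) qz) (qmul q (K2 (K1i qy)) (E qz)))"
    using mul qzqy qlin_smul[OF lin(1) qxy_QP(3)] by (metis gens_QP)
  have FQyx: "qadd (qmul q qy (F qx)) (qmul q (F qy) (K2i (K1 qx))) =
      qsmul q (qadd (qmul q qx (F qy)) (qmul q (F qx) (K2i (K1 qy))))"
    using mul qyqx qlin_smul[OF lin(2) qxy_QP(1)] by (metis gens_QP)
  have FQzx: "qadd (qmul q qz (F qx)) (qmul q (F qz) (K2i (K1 qx))) =
      qsmul q (qadd (qmul q qx (F qz)) (qmul q (F qx) (K2i (K1 qz))))"
    using mul qzqx qlin_smul[OF lin(2) qxy_QP(2)] by (metis gens_QP)
  have FQzy: "qadd (qmul q qz (F qy)) (qmul q (F qz) (K2i (K1 qy))) =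
      qsmul q (qadd (qmul q qy (F qz)) (qmul q (F qy) (K2i (K1 qz))))"
    using mul qzqy qlin_smul[OF lin(2) qxy_QP(3)] by (metis gens_QP)
  note EQyx' = EQyx[unfolded GEx GEy lin_rules, THEN fun_cong, THEN fun_cong, THEN fun_cong]
  note EQzx' = EQzx[unfolded GEx GEz lin_rules, THEN fun_cong, THEN fun_cong, THEN fun_cong]
  note EQzy' = EQzy[unfolded GEz GEy lin_rules, THEN fun_cong, THEN fun_cong, THEN fun_cong]
  note FQyx' = FQyx[unfolded GFx GFy lin_rules, THEN fun_cong, THEN fun_cong, THEN fun_cong]
  note FQzx' = FQzx[unfolded GFx GFz lin_rules, THEN fun_cong, THEN fun_cong, THEN fun_cong]
  note FQzy' = FQzy[unfolded GFz GFy lin_rules, THEN fun_cong, THEN fun_cong, THEN fun_cong]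
  have KEx1: "K1 (E qx) = qsmul (inverse q * \<alpha>1) (E qx)"
    using rel hK1 by (simp add: qlin_smul[OF lin(1)] qsmul_qsmul)
  have KEx2: "K2 (E qx) = qsmul (- inverse q * \<alpha>2) (E qx)"
    using rel hK2 by (simp add: qlin_smul[OF lin(1)] qsmul_qsmul)
  have KEz1: "K1 (E qz) = qsmul (inverse q * \<gamma>1) (E qz)"
    using rel hK1 by (simp add: qlin_smul[OF lin(1)] qsmul_qsmul)
  have KEz2: "K2 (E qz) = qsmul (- inverse q * \<gamma>2) (E qz)"
    using rel hK2 by (simp add: qlin_smul[OF lin(1)] qsmul_qsmul)
  have KFx1: "K1 (F qx) = qsmul (q * \<alpha>1) (F qx)"
    using rel hK1 by (simp add: qlin_smul[OF lin(2)] qsmul_qsmul)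
  have KFx2: "K2 (F qx) = qsmul (- q * \<alpha>2) (F qx)"
    using rel hK2 by (simp add: qlin_smul[OF lin(2)] qsmul_qsmul)
  have KFz1: "K1 (F qz) = qsmul (q * \<gamma>1) (F qz)"
    using rel hK1 by (simp add: qlin_smul[OF lin(2)] qsmul_qsmul)
  have KFz2: "K2 (F qz) = qsmul (- q * \<gamma>2) (F qz)"
    using rel hK2 by (simp add: qlin_smul[OF lin(2)] qsmul_qsmul)
  have ex1: "inverse q * \<alpha>1 * E qx 0 0 0 = E qx 0 0 0" "inverse q * \<alpha>1 * E qx 1 0 0 = \<alpha>1 * E qx 1 0 0"
     "inverse q * \<alpha>1 * E qx 0 1 0 = \<beta>1 * E qx 0 1 0" "inverse q * \<alpha>1 * E qx 0 0 1 = \<gamma>1 * E qx 0 0 1"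
  proof -
    have aux: "\<And>i j k. K1 (E qx) i j k = (inverse q * \<alpha>1) * E qx i j k" by (simp add: KEx1 qsmul_def)
    show "inverse q * \<alpha>1 * E qx 0 0 0 = E qx 0 0 0" "inverse q * \<alpha>1 * E qx 1 0 0 = \<alpha>1 * E qx 1 0 0"
     "inverse q * \<alpha>1 * E qx 0 1 0 = \<beta>1 * E qx 0 1 0" "inverse q * \<alpha>1 * E qx 0 0 1 = \<gamma>1 * E qx 0 0 1" using low1[OF QPs(1)] by (simp_all only: aux)
  qed
  have ex2: "- inverse q * \<alpha>2 * E qx 0 0 0 = E qx 0 0 0" "- inverse q * \<alpha>2 * E qx 1 0 0 = \<alpha>2 * E qx 1 0 0"
     "- inverse q * \<alpha>2 * E qx 0 1 0 = \<beta>2 * E qx 0 1 0" "- inverse q * \<alpha>2 * E qx 0 0 1 = \<gamma>2 * E qx 0 0 1"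
  proof -
    have aux: "\<And>i j k. K2 (E qx) i j k = (- inverse q * \<alpha>2) * E qx i j k" by (simp add: KEx2 qsmul_def)
    show "- inverse q * \<alpha>2 * E qx 0 0 0 = E qx 0 0 0" "- inverse q * \<alpha>2 * E qx 1 0 0 = \<alpha>2 * E qx 1 0 0"
     "- inverse q * \<alpha>2 * E qx 0 1 0 = \<beta>2 * E qx 0 1 0" "- inverse q * \<alpha>2 * E qx 0 0 1 = \<gamma>2 * E qx 0 0 1" using low2[OF QPs(1)] by (simp_all only: aux)
  qed
  have ez1: "inverse q * \<gamma>1 * E qz 0 0 0 = E qz 0 0 0" "inverse q * \<gamma>1 * E qz 1 0 0 = \<alpha>1 * E qz 1 0 0"
     "inverse q * \<gamma>1 * E qz 0 1 0 = \<beta>1 * E qz 0 1 0" "inverse q * \<gamma>1 * E qz 0 0 1 = \<gamma>1 * E qz 0 0 1"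
  proof -
    have aux: "\<And>i j k. K1 (E qz) i j k = (inverse q * \<gamma>1) * E qz i j k" by (simp add: KEz1 qsmul_def)
    show "inverse q * \<gamma>1 * E qz 0 0 0 = E qz 0 0 0" "inverse q * \<gamma>1 * E qz 1 0 0 = \<alpha>1 * E qz 1 0 0"
     "inverse q * \<gamma>1 * E qz 0 1 0 = \<beta>1 * E qz 0 1 0" "inverse q * \<gamma>1 * E qz 0 0 1 = \<gamma>1 * E qz 0 0 1" using low1[OF QPs(3)] by (simp_all only: aux)
  qed
  have ez2: "- inverse q * \<gamma>2 * E qz 0 0 0 = E qz 0 0 0" "- inverse q * \<gamma>2 * E qz 1 0 0 = \<alpha>2 * E qz 1 0 0"
     "- inverse q * \<gamma>2 * E qz 0 1 0 = \<beta>2 * E qz 0 1 0" "- inverse q * \<gamma>2 * E qz 0 0 1 = \<gamma>2 * E qz 0 0 1"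
  proof -
    have aux: "\<And>i j k. K2 (E qz) i j k = (- inverse q * \<gamma>2) * E qz i j k" by (simp add: KEz2 qsmul_def)
    show "- inverse q * \<gamma>2 * E qz 0 0 0 = E qz 0 0 0" "- inverse q * \<gamma>2 * E qz 1 0 0 = \<alpha>2 * E qz 1 0 0"
     "- inverse q * \<gamma>2 * E qz 0 1 0 = \<beta>2 * E qz 0 1 0" "- inverse q * \<gamma>2 * E qz 0 0 1 = \<gamma>2 * E qz 0 0 1" using low2[OF QPs(3)] by (simp_all only: aux)
  qed
  have fx1: "q * \<alpha>1 * F qx 0 0 0 = F qx 0 0 0" "q * \<alpha>1 * F qx 1 0 0 = \<alpha>1 * F qx 1 0 0"
     "q * \<alpha>1 * F qx 0 1 0 = \<beta>1 * F qx 0 1 0" "q * \<alpha>1 * F qx 0 0 1 = \<gamma>1 * F qx 0 0 1"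
  proof -
    have aux: "\<And>i j k. K1 (F qx) i j k = (q * \<alpha>1) * F qx i j k" by (simp add: KFx1 qsmul_def)
    show "q * \<alpha>1 * F qx 0 0 0 = F qx 0 0 0" "q * \<alpha>1 * F qx 1 0 0 = \<alpha>1 * F qx 1 0 0"
     "q * \<alpha>1 * F qx 0 1 0 = \<beta>1 * F qx 0 1 0" "q * \<alpha>1 * F qx 0 0 1 = \<gamma>1 * F qx 0 0 1" using low1[OF QPs(4)] by (simp_all only: aux)
  qed
  have fx2: "- q * \<alpha>2 * F qx 0 0 0 = F qx 0 0 0" "- q * \<alpha>2 * F qx 1 0 0 = \<alpha>2 * F qx 1 0 0"
     "- q * \<alpha>2 * F qx 0 1 0 = \<beta>2 * F qx 0 1 0" "- q * \<alpha>2 * F qx 0 0 1 = \<gamma>2 * F qx 0 0 1"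
  proof -
    have aux: "\<And>i j k. K2 (F qx) i j k = (- q * \<alpha>2) * F qx i j k" by (simp add: KFx2 qsmul_def)
    show "- q * \<alpha>2 * F qx 0 0 0 = F qx 0 0 0" "- q * \<alpha>2 * F qx 1 0 0 = \<alpha>2 * F qx 1 0 0"
     "- q * \<alpha>2 * F qx 0 1 0 = \<beta>2 * F qx 0 1 0" "- q * \<alpha>2 * F qx 0 0 1 = \<gamma>2 * F qx 0 0 1" using low2[OF QPs(4)] by (simp_all only: aux)
  qed
  have fz1: "q * \<gamma>1 * F qz 0 0 0 = F qz 0 0 0" "q * \<gamma>1 * F qz 1 0 0 = \<alpha>1 * F qz 1 0 0"
     "q * \<gamma>1 * F qz 0 1 0 = \<beta>1 * F qz 0 1 0" "q * \<gamma>1 * F qz 0 0 1 = \<gamma>1 * F qz 0 0 1"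
  proof -
    have aux: "\<And>i j k. K1 (F qz) i j k = (q * \<gamma>1) * F qz i j k" by (simp add: KFz1 qsmul_def)
    show "q * \<gamma>1 * F qz 0 0 0 = F qz 0 0 0" "q * \<gamma>1 * F qz 1 0 0 = \<alpha>1 * F qz 1 0 0"
     "q * \<gamma>1 * F qz 0 1 0 = \<beta>1 * F qz 0 1 0" "q * \<gamma>1 * F qz 0 0 1 = \<gamma>1 * F qz 0 0 1" using low1[OF QPs(6)] by (simp_all only: aux)
  qed
  have fz2: "- q * \<gamma>2 * F qz 0 0 0 = F qz 0 0 0" "- q * \<gamma>2 * F qz 1 0 0 = \<alpha>2 * F qz 1 0 0"
     "- q * \<gamma>2 * F qz 0 1 0 = \<beta>2 * F qz 0 1 0" "- q * \<gamma>2 * F qz 0 0 1 = \<gamma>2 * F qz 0 0 1"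
  proof -
    have aux: "\<And>i j k. K2 (F qz) i j k = (- q * \<gamma>2) * F qz i j k" by (simp add: KFz2 qsmul_def)
    show "- q * \<gamma>2 * F qz 0 0 0 = F qz 0 0 0" "- q * \<gamma>2 * F qz 1 0 0 = \<alpha>2 * F qz 1 0 0"
     "- q * \<gamma>2 * F qz 0 1 0 = \<beta>2 * F qz 0 1 0" "- q * \<gamma>2 * F qz 0 0 1 = \<gamma>2 * F qz 0 0 1" using low2[OF QPs(6)] by (simp_all only: aux)
  qed
  have sum1: "\<And>i j k::nat. i + j + k = 1 \<longleftrightarrow> (i = 1 \<and> j = 0 \<and> k = 0) \<or> (i = 0 \<and> j = 1 \<and> k = 0) \<or> (i = 0 \<and> j = 0 \<and> k = 1)"
    by arith
  have P1: "a0 \<noteq> 0 \<longrightarrow>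
        \<alpha>1 = q \<and> \<alpha>2 = - q \<and> inverse \<beta>1 * \<beta>2 = q \<and> inverse \<gamma>1 * \<gamma>2 = q \<and>
        hcomp 1 (E qx) = qzero \<and>
        hcomp 1 (E qy) = qsmul (- (a0 * (t2 + q * t1)) / (2 * q * \<beta>1)) qz"
  proof
    assume a: "a0 \<noteq> 0"
    have r1: "\<beta>2/\<beta>1 * a0 = q * a0" using EQyx'[of 0 1 0] unfolding a0_def by (simp add: eval_rules)
    have r2: "\<gamma>2/\<gamma>1 * a0 = q * a0" using EQzx'[of 0 0 1] unfolding a0_def by (simp add: eval_rules)
    have r3: "E qy 1 0 0 = q * (\<alpha>2/\<alpha>1 * E qy 1 0 0)" using EQyx'[of 2 0 0] by (simp add: eval_rules)
    have r4: "q * E qy 0 1 0 + \<beta>2/\<beta>1 * (q * E qx 1 0 0) = q * (E qx 1 0 0 + \<alpha>2/\<alpha>1 * E qy 0 1 0)"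
      using EQyx'[of 1 1 0] by (simp add: eval_rules)
    have r5: "q * E qy 0 0 1 + (t2 * \<alpha>1 * \<gamma>1 - t1 * \<alpha>2 * \<gamma>2) / (\<beta>1 * \<alpha>1 * \<gamma>1) * a0 = q * (\<alpha>2/\<alpha>1 * E qy 0 0 1)"
      using EQyx'[of 1 0 1] unfolding a0_def by (simp add: eval_rules)
    show "\<alpha>1 = q \<and> \<alpha>2 = - q \<and> inverse \<beta>1 * \<beta>2 = q \<and> inverse \<gamma>1 * \<gamma>2 = q \<and>
        hcomp 1 (E qx) = qzero \<and>
        hcomp 1 (E qy) = qsmul (- (a0 * (t2 + q * t1)) / (2 * q * \<beta>1)) qz"
    proof -
      have "inverse q * \<alpha>1 = 1" using ex1(1) a unfolding a0_def by simp
      hence A1: "\<alpha>1 = q" using q0 by (simp add: field_simps)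
      have "- inverse q * \<alpha>2 = 1" using canc[OF ex2(1)] a unfolding a0_def by simp
      hence A2: "\<alpha>2 = - q" using q0 by (simp add: field_simps) (metis minus_minus)
      have B: "\<beta>2/\<beta>1 = q" using r1 a by (metis mult_cancel_right)
      hence B': "\<beta>2 = q * \<beta>1" using hnz by (simp add: field_simps)
      have G: "\<gamma>2/\<gamma>1 = q" using r2 a by (metis mult_cancel_right)
      hence G': "\<gamma>2 = q * \<gamma>1" using hnz by (simp add: field_simps)
      have x100: "E qx 1 0 0 = 0" using ex1(2) A1 q0 q1 by (simp add: field_simps)
      have x010: "E qx 0 1 0 = 0"
      proof (rule ccontr)
        assume n: "E qx 0 1 0 \<noteq> 0"
        have "\<beta>1 = 1" using ex1(3) A1 n q0 by (simp add: field_simps)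
        moreover have "\<beta>2 = 1" using ex2(3) A2 n q0 by (simp add: field_simps)
        ultimately show False using B' q1 by simp
      qed
      have x001: "E qx 0 0 1 = 0"
      proof (rule ccontr)
        assume n: "E qx 0 0 1 \<noteq> 0"
        have "\<gamma>1 = 1" using ex1(4) A1 n q0 by (simp add: field_simps)
        moreover have "\<gamma>2 = 1" using ex2(4) A2 n q0 by (simp add: field_simps)
        ultimately show False using G' q1 by simp
      qed
      have y100: "E qy 1 0 0 = 0" using r3 A1 A2 q0 qm1 by (simp add: field_simps)
        (metis add.inverse_inverse add_eq_0_iff mult_cancel_right2 mult_minus_left)
      have y010: "E qy 0 1 0 = 0" using r4 A1 A2 x100 q0 by (simp add: field_simps)
      have y001: "E qy 0 0 1 = - (a0 * (t2 + q * t1)) / (2 * q * \<beta>1)"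
      proof -
        have s2: "(t2 * \<alpha>1 * \<gamma>1 - t1 * \<alpha>2 * \<gamma>2) / (\<beta>1 * \<alpha>1 * \<gamma>1) = (t2 + q*t1)/\<beta>1"
          using A1 A2 G' q0 hnz by (simp add: field_simps)
        have ra: "\<alpha>2/\<alpha>1 = -1" using A1 A2 q0 by simp
        have "q * E qy 0 0 1 + (t2 + q*t1)/\<beta>1 * a0 = - (q * E qy 0 0 1)" using r5 unfolding s2 ra by simp
        hence "2 * q * E qy 0 0 1 + ((t2 + q*t1)/\<beta>1 * a0) = 0" by (simp add: algebra_simps)
        hence "2 * q * E qy 0 0 1 = - ((t2 + q*t1)/\<beta>1 * a0)" by (simp add: eq_neg_iff_add_eq_0)
        thus ?thesis using q0 hnz by (simp add: field_simps)
      qed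
      have H1: "hcomp 1 (E qx) = qzero"
        unfolding hcomp1_eq x100 x010 x001 by (rule ext)+ (simp add: qzero_def)
      have H2: "hcomp 1 (E qy) = qsmul (- (a0 * (t2 + q * t1)) / (2 * q * \<beta>1)) qz"
        unfolding hcomp1_eq y100 y010 y001 by (rule ext)+ (simp add: qsmul_def qz_def qmono_apply)
      show ?thesis using A1 A2 B G H1 H2 hnz by (simp add: field_simps)
    qed
  qed
  have P2: "c0 \<noteq> 0 \<longrightarrow>
        \<gamma>1 = q \<and> \<gamma>2 = - q \<and> inverse \<beta>1 * \<beta>2 = inverse q \<and> inverse \<alpha>1 * \<alpha>2 = inverse q \<and>
        hcomp 1 (E qz) = qzero \<and>
        hcomp 1 (E qy) = qsmul (- (c0 * (t1 + q * t2)) / (2 * q * \<beta>1)) qx"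
  proof
    assume a: "c0 \<noteq> 0"
    have r1: "c0 = q * (\<beta>2/\<beta>1 * c0)" using EQzy'[of 0 1 0] unfolding c0_def by (simp add: eval_rules)
    have r2: "c0 = q * (\<alpha>2/\<alpha>1 * c0)" using EQzx'[of 1 0 0] unfolding c0_def by (simp add: eval_rules)
    have r3: "\<gamma>2/\<gamma>1 * E qy 0 0 1 = q * E qy 0 0 1" using EQzy'[of 0 0 2] by (simp add: eval_rules)
    have r4: "q * E qz 0 0 1 + \<gamma>2/\<gamma>1 * (q * E qy 0 1 0) = q * (E qy 0 1 0 + \<beta>2/\<beta>1 * E qz 0 0 1)"
      using EQzy'[of 0 1 1] by (simp add: eval_rules)
    have r5: "\<gamma>2/\<gamma>1 * (q * E qy 1 0 0) = q * (E qy 1 0 0 + (t2 * \<alpha>1 * \<gamma>1 - t1 * \<alpha>2 * \<gamma>2) / (\<beta>1 * \<alpha>1 * \<gamma>1) * c0)"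
      using EQzy'[of 1 0 1] unfolding c0_def by (simp add: eval_rules)
    have "inverse q * \<gamma>1 = 1" using canc[OF ez1(1)] a unfolding c0_def by simp
    hence G1: "\<gamma>1 = q" using q0 by (simp add: field_simps)
    have "- inverse q * \<gamma>2 = 1" using canc[OF ez2(1)] a unfolding c0_def by simp
    hence G2: "\<gamma>2 = - q" using q0 by (simp add: field_simps) (metis minus_minus)
    have "q * (\<beta>2/\<beta>1) = 1" using canc[of "q * (\<beta>2/\<beta>1)" c0] r1 a by (simp add: mult.assoc)
    hence B: "inverse \<beta>1 * \<beta>2 = inverse q" using q0 hnz by (simp add: field_simps)
    hence B': "\<beta>2 = \<beta>1 / q" using q0 hnz by (simp add: field_simps)
    have "q * (\<alpha>2/\<alpha>1) = 1" using canc[of "q * (\<alpha>2/\<alpha>1)" c0] r2 a by (simp add: mult.assoc)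
    hence A: "inverse \<alpha>1 * \<alpha>2 = inverse q" using q0 hnz by (simp add: field_simps)
    hence A': "\<alpha>2 = \<alpha>1 / q" using q0 hnz by (simp add: field_simps)
    have z001: "E qz 0 0 1 = 0" using ez1(4) G1 q0 q1 by (simp add: field_simps)
    have z100: "E qz 1 0 0 = 0"
    proof (rule ccontr)
      assume n: "E qz 1 0 0 \<noteq> 0"
      have "\<alpha>1 = 1" using ez1(2) G1 n q0 by (simp add: field_simps)
      moreover have "\<alpha>2 = 1" using ez2(2) G2 n q0 by (simp add: field_simps)
      ultimately show False using A' q1 by (simp add: field_simps)
    qed
    have z010: "E qz 0 1 0 = 0"
    proof (rule ccontr)
      assume n: "E qz 0 1 0 \<noteq> 0"
      have "\<beta>1 = 1" using ez1(3) G1 n q0 by (simp add: field_simps)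
      moreover have "\<beta>2 = 1" using ez2(3) G2 n q0 by (simp add: field_simps)
      ultimately show False using B' q1 by (simp add: field_simps)
    qed
    have rg: "\<gamma>2/\<gamma>1 = -1" using G1 G2 q0 by simp
    have y001: "E qy 0 0 1 = 0" using r3 unfolding rg using qm1
      by (metis add.inverse_inverse add_eq_0_iff mult_cancel_right2 mult_minus_left)
    have y010: "E qy 0 1 0 = 0" using r4 unfolding rg z001 using q0 by (simp add: field_simps)
    have y100: "E qy 1 0 0 = - (c0 * (t1 + q * t2)) / (2 * q * \<beta>1)"
    proof -
      have s2: "(t2 * \<alpha>1 * \<gamma>1 - t1 * \<alpha>2 * \<gamma>2) / (\<beta>1 * \<alpha>1 * \<gamma>1) = (t1 + q*t2)/(q*\<beta>1)"
        using A' G1 G2 q0 hnz by (simp add: field_simps)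
      have "- (q * E qy 1 0 0) = q * (E qy 1 0 0 + (t1 + q*t2)/(q*\<beta>1) * c0)" using r5 unfolding s2 rg by simp
      hence "q * (2 * E qy 1 0 0 + (t1 + q*t2)/(q*\<beta>1) * c0) = 0" by (simp add: algebra_simps)
      hence "2 * E qy 1 0 0 + (t1 + q*t2)/(q*\<beta>1) * c0 = 0" using q0 by simp
      hence "2 * E qy 1 0 0 = - ((t1 + q*t2)/(q*\<beta>1) * c0)" by (simp add: eq_neg_iff_add_eq_0)
      thus ?thesis using q0 hnz by (simp add: field_simps)
    qed
    have H1: "hcomp 1 (E qz) = qzero"
      unfolding hcomp1_eq z100 z010 z001 by (rule ext)+ (simp add: qzero_def)
    have H2: "hcomp 1 (E qy) = qsmul (- (c0 * (t1 + q * t2)) / (2 * q * \<beta>1)) qx"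
      unfolding hcomp1_eq y100 y010 y001 by (rule ext)+ (simp add: qsmul_def qx_def qmono_apply)
    show "\<gamma>1 = q \<and> \<gamma>2 = - q \<and> inverse \<beta>1 * \<beta>2 = inverse q \<and> inverse \<alpha>1 * \<alpha>2 = inverse q \<and>
        hcomp 1 (E qz) = qzero \<and>
        hcomp 1 (E qy) = qsmul (- (c0 * (t1 + q * t2)) / (2 * q * \<beta>1)) qx"
      using G1 G2 A B H1 H2 by simp
  qed
  have P3: "a0' \<noteq> 0 \<longrightarrow>
        \<alpha>1 = inverse q \<and> \<alpha>2 = - inverse q \<and> \<beta>1 * inverse \<beta>2 = inverse q \<and>
        \<gamma>1 * inverse \<gamma>2 = inverse q \<and>
        hcomp 1 (F qx) = qzero \<and>
        hcomp 1 (F qy) = qsmul (a0' * (t2 - q * t1) / (2 * q * \<alpha>2 * \<gamma>2)) qz"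
  proof
    assume a: "a0' \<noteq> 0"
    have r1: "a0' = q * (\<beta>1/\<beta>2 * a0')" using FQyx'[of 0 1 0] unfolding a0'_def by (simp add: eval_rules)
    have r2: "a0' = q * (\<gamma>1/\<gamma>2 * a0')" using FQzx'[of 0 0 1] unfolding a0'_def by (simp add: eval_rules)
    have r3: "\<alpha>1/\<alpha>2 * F qy 1 0 0 = q * F qy 1 0 0" using FQyx'[of 2 0 0] by (simp add: eval_rules)
    have r4: "q * F qx 1 0 0 + \<alpha>1/\<alpha>2 * (q * F qy 0 1 0) = q * (F qy 0 1 0 + \<beta>1/\<beta>2 * F qx 1 0 0)"
      using FQyx'[of 1 1 0] by (simp add: eval_rules)
    have r5: "\<alpha>1/\<alpha>2 * (q * F qy 0 0 1) = q * (F qy 0 0 1 + (t1 * \<beta>2 - \<beta>1 * t2) / (\<beta>2 * \<alpha>2 * \<gamma>2) * a0')"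
      using FQyx'[of 1 0 1] unfolding a0'_def by (simp add: eval_rules)
    have "q * \<alpha>1 = 1" using canc[OF fx1(1)] a unfolding a0'_def by simp
    hence A1: "\<alpha>1 = inverse q" using q0 by (simp add: field_simps)
    have "- q * \<alpha>2 = 1" using canc[OF fx2(1)] a unfolding a0'_def by simp
    hence A2: "\<alpha>2 = - inverse q" using q0 by (simp add: field_simps) (metis minus_minus)
    have "q * (\<beta>1/\<beta>2) = 1" using canc[of "q * (\<beta>1/\<beta>2)" a0'] r1 a by (simp add: mult.assoc)
    hence B: "\<beta>1 * inverse \<beta>2 = inverse q" using q0 hnz by (simp add: field_simps)
    hence B': "\<beta>1 = \<beta>2 / q" using q0 hnz by (simp add: field_simps)
    have "q * (\<gamma>1/\<gamma>2) = 1" using canc[of "q * (\<gamma>1/\<gamma>2)" a0'] r2 a by (simp add: mult.assoc)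
    hence G: "\<gamma>1 * inverse \<gamma>2 = inverse q" using q0 hnz by (simp add: field_simps)
    hence G': "\<gamma>1 = \<gamma>2 / q" using q0 hnz by (simp add: field_simps)
    have x100: "F qx 1 0 0 = 0" using fx1(2) A1 q0 q1 by (simp add: field_simps)
    have x010: "F qx 0 1 0 = 0"
    proof (rule ccontr)
      assume n: "F qx 0 1 0 \<noteq> 0"
      have "\<beta>1 = 1" using fx1(3) A1 n q0 by (simp add: field_simps)
      moreover have "\<beta>2 = 1" using fx2(3) A2 n q0 by (simp add: field_simps)
      ultimately show False using B' q1 by (simp add: field_simps)
    qed
    have x001: "F qx 0 0 1 = 0"
    proof (rule ccontr)
      assume n: "F qx 0 0 1 \<noteq> 0"
      have "\<gamma>1 = 1" using fx1(4) A1 n q0 by (simp add: field_simps)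
      moreover have "\<gamma>2 = 1" using fx2(4) A2 n q0 by (simp add: field_simps)
      ultimately show False using G' q1 by (simp add: field_simps)
    qed
    have ra: "\<alpha>1/\<alpha>2 = -1" using A1 A2 q0 by simp
    have y100: "F qy 1 0 0 = 0" using r3 unfolding ra using qm1
      by (metis add.inverse_inverse add_eq_0_iff mult_cancel_right2 mult_minus_left)
    have y010: "F qy 0 1 0 = 0" using r4 unfolding ra x100 using q0 by (simp add: field_simps)
    have y001: "F qy 0 0 1 = a0' * (t2 - q * t1) / (2 * q * \<alpha>2 * \<gamma>2)"
    proof -
      have s2: "(t1 * \<beta>2 - \<beta>1 * t2) / (\<beta>2 * \<alpha>2 * \<gamma>2) = (q * t1 - t2)/(q * \<alpha>2 * \<gamma>2)"
        using B' q0 hnz by (simp add: field_simps)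
      have "- (q * F qy 0 0 1) = q * (F qy 0 0 1 + (q * t1 - t2)/(q * \<alpha>2 * \<gamma>2) * a0')" using r5 unfolding s2 ra by simp
      hence "q * (2 * F qy 0 0 1 + (q * t1 - t2)/(q * \<alpha>2 * \<gamma>2) * a0') = 0" by (simp add: algebra_simps)
      hence "2 * F qy 0 0 1 + (q * t1 - t2)/(q * \<alpha>2 * \<gamma>2) * a0' = 0" using q0 by simp
      hence "2 * F qy 0 0 1 = - ((q * t1 - t2)/(q * \<alpha>2 * \<gamma>2) * a0')" by (simp add: eq_neg_iff_add_eq_0)
      thus ?thesis using q0 hnz by (simp add: field_simps)
    qed
    have H1: "hcomp 1 (F qx) = qzero"
      unfolding hcomp1_eq x100 x010 x001 by (rule ext)+ (simp add: qzero_def)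
    have H2: "hcomp 1 (F qy) = qsmul (a0' * (t2 - q * t1) / (2 * q * \<alpha>2 * \<gamma>2)) qz"
      unfolding hcomp1_eq y100 y010 y001 by (rule ext)+ (simp add: qsmul_def qz_def qmono_apply)
    show "\<alpha>1 = inverse q \<and> \<alpha>2 = - inverse q \<and> \<beta>1 * inverse \<beta>2 = inverse q \<and>
        \<gamma>1 * inverse \<gamma>2 = inverse q \<and>
        hcomp 1 (F qx) = qzero \<and>
        hcomp 1 (F qy) = qsmul (a0' * (t2 - q * t1) / (2 * q * \<alpha>2 * \<gamma>2)) qz"
      using A1 A2 B G H1 H2 by simp
  qed
  have P4: "c0' \<noteq> 0 \<longrightarrow>
        \<gamma>1 = inverse q \<and> \<gamma>2 = - inverse q \<and> \<beta>1 * inverse \<beta>2 = q \<and> \<alpha>1 * inverse \<alpha>2 = q \<and>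
        hcomp 1 (F qz) = qzero \<and>
        hcomp 1 (F qy) = qsmul (c0' * (q * t2 - t1) / (2 * q * \<alpha>2 * \<gamma>2)) qx"
  proof
    assume a: "c0' \<noteq> 0"
    have r1: "\<beta>1/\<beta>2 * c0' = q * c0'" using FQzy'[of 0 1 0] unfolding c0'_def by (simp add: eval_rules)
    have r2: "\<alpha>1/\<alpha>2 * c0' = q * c0'" using FQzx'[of 1 0 0] unfolding c0'_def by (simp add: eval_rules)
    have r3: "F qy 0 0 1 = q * (\<gamma>1/\<gamma>2 * F qy 0 0 1)" using FQzy'[of 0 0 2] by (simp add: eval_rules)
    have r4: "q * F qy 0 1 0 + \<beta>1/\<beta>2 * (q * F qz 0 0 1) = q * (F qz 0 0 1 + \<gamma>1/\<gamma>2 * F qy 0 1 0)"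
      using FQzy'[of 0 1 1] by (simp add: eval_rules)
    have r5: "q * F qy 1 0 0 + (t1 * \<beta>2 - \<beta>1 * t2) / (\<beta>2 * \<alpha>2 * \<gamma>2) * c0' = q * (\<gamma>1/\<gamma>2 * F qy 1 0 0)"
      using FQzy'[of 1 0 1] unfolding c0'_def by (simp add: eval_rules)
    have "q * \<gamma>1 = 1" using canc[OF fz1(1)] a unfolding c0'_def by simp
    hence G1: "\<gamma>1 = inverse q" using q0 by (simp add: field_simps)
    have "- q * \<gamma>2 = 1" using canc[OF fz2(1)] a unfolding c0'_def by simp
    hence G2: "\<gamma>2 = - inverse q" using q0 by (simp add: field_simps) (metis minus_minus)
    have "\<beta>1/\<beta>2 = q" using r1 a by (metis mult_cancel_right)
    hence B: "\<beta>1 * inverse \<beta>2 = q" by (simp add: field_simps)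
    hence B': "\<beta>1 = q * \<beta>2" using hnz by (simp add: field_simps)
    have "\<alpha>1/\<alpha>2 = q" using r2 a by (metis mult_cancel_right)
    hence A: "\<alpha>1 * inverse \<alpha>2 = q" by (simp add: field_simps)
    hence A': "\<alpha>1 = q * \<alpha>2" using hnz by (simp add: field_simps)
    have z001: "F qz 0 0 1 = 0" using fz1(4) G1 q0 q1 by (simp add: field_simps)
    have z100: "F qz 1 0 0 = 0"
    proof (rule ccontr)
      assume n: "F qz 1 0 0 \<noteq> 0"
      have "\<alpha>1 = 1" using fz1(2) G1 n q0 by (simp add: field_simps)
      moreover have "\<alpha>2 = 1" using fz2(2) G2 n q0 by (simp add: field_simps)
      ultimately show False using A' q1 by (simp add: field_simps)
    qed
    have z010: "F qz 0 1 0 = 0"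
    proof (rule ccontr)
      assume n: "F qz 0 1 0 \<noteq> 0"
      have "\<beta>1 = 1" using fz1(3) G1 n q0 by (simp add: field_simps)
      moreover have "\<beta>2 = 1" using fz2(3) G2 n q0 by (simp add: field_simps)
      ultimately show False using B' q1 by (simp add: field_simps)
    qed
    have rg: "\<gamma>1/\<gamma>2 = -1" using G1 G2 q0 by simp
    have y001: "F qy 0 0 1 = 0" using r3 unfolding rg using qm1
      by (metis add.inverse_inverse add_eq_0_iff mult_cancel_right2 mult_minus_left)
    have y010: "F qy 0 1 0 = 0" using r4 unfolding rg z001 using q0 by (simp add: field_simps)
    have y100: "F qy 1 0 0 = c0' * (q * t2 - t1) / (2 * q * \<alpha>2 * \<gamma>2)"
    proof -
      have s2: "(t1 * \<beta>2 - \<beta>1 * t2) / (\<beta>2 * \<alpha>2 * \<gamma>2) = (t1 - q * t2)/(\<alpha>2 * \<gamma>2)"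
        using B' q0 hnz by (simp add: field_simps)
      have "q * F qy 1 0 0 + (t1 - q * t2)/(\<alpha>2 * \<gamma>2) * c0' = - (q * F qy 1 0 0)" using r5 unfolding s2 rg by simp
      hence "2 * q * F qy 1 0 0 + (t1 - q * t2)/(\<alpha>2 * \<gamma>2) * c0' = 0" by (simp add: algebra_simps)
      hence "2 * q * F qy 1 0 0 = - ((t1 - q * t2)/(\<alpha>2 * \<gamma>2) * c0')" by (simp add: eq_neg_iff_add_eq_0)
      thus ?thesis using q0 hnz by (simp add: field_simps)
    qed
    have H1: "hcomp 1 (F qz) = qzero"
      unfolding hcomp1_eq z100 z010 z001 by (rule ext)+ (simp add: qzero_def)
    have H2: "hcomp 1 (F qy) = qsmul (c0' * (q * t2 - t1) / (2 * q * \<alpha>2 * \<gamma>2)) qx"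
      unfolding hcomp1_eq y100 y010 y001 by (rule ext)+ (simp add: qsmul_def qx_def qmono_apply)
    show "\<gamma>1 = inverse q \<and> \<gamma>2 = - inverse q \<and> \<beta>1 * inverse \<beta>2 = q \<and> \<alpha>1 * inverse \<alpha>2 = q \<and>
        hcomp 1 (F qz) = qzero \<and>
        hcomp 1 (F qy) = qsmul (c0' * (q * t2 - t1) / (2 * q * \<alpha>2 * \<gamma>2)) qx"
      using G1 G2 A B H1 H2 by simp
  qed
  show ?thesis using P1 P2 P3 P4 by blast
qed

end
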